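(* Let $\mathbf{x}$ be a parking function of length $n$ and run Algorithm A on $\mathbf{x}$. The algorithm terminates, every index $j\in[n]$ is the up feeder of exactly one up step, and the source priority vector $s(\mathbf{x})$ is a permutation of $(-1,-2,\dots,-n)$; moreover, for $i\ne j$, $|s_i(\mathbf{x})|>|s_j(\mathbf{x})|$ if and only if $i$ was the up feeder of an up step occurring before the up step with up feeder $j$.
   Context: A parking function of length $n$ is a sequence of positive integers which, sorted increasingly as $x_{(1)}\le\dots\le x_{(n)}$, satisfies $x_{(k)}\le k$ for all $k$. Algorithm A: Input a parking function $\mathbf{x}\in\mathbb{Z}_{>0}^n$; start with the vertex set $[n]$ and no edges, and set $\mathbf{y}:=\mathbf{x}-(1,\dots,1)$. Repeat the following. (Up step) If some $y_k=0$: let $j:=\max\{k: y_k=0\}$ (the up feeder); for every $k>j$ with $y_k>0$, introduce the directed (up) edge $j\rightarrow k$ and replace $y_k$ by $y_k-1$; replace every entry that was negative at the start of this step by that entry minus $1$; set $y_j:=-1$; repeat. (Down step) Else, if some $y_k>0$: among all indices $j$ such that there is $k<j$ with $y_k>0$ and the edge $k\leftarrow j$ not yet introduced (down feeder candidates), choose $j$ with minimal $y_j$ (the down feeder); for every $k<j$ with $y_k>0$, introduce the directed (down) edge $k\leftarrow j$ (directed from $j$ to $k$) and replace $y_k$ by $y_k-1$; repeat. (Stop) Else (all $y_k<0$): join every pair of vertices not yet joined by an undirected (downish) edge and stop. Output: the mixed graph $P(\mathbf{x})$ and the source priority vector $s(\mathbf{x}):=(y_1,\dots,y_n)$ (final values).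 *)

theory Defs
  imports Main
begin

definition parking_function :: "nat list \<Rightarrow> bool" where
  "parking_function xs \<longleftrightarrow>
     (\<forall>i<length xs. 0 < xs ! i) \<and> (\<forall>i<length xs. sort xs ! i \<le> i + 1)"

text \<open>Step labels: the feeder of an up step / down step.\<close>
datatype lbl = Up nat | Down nat

text \<open>State of Algorithm A on vertex set {1..n}: the vector y (indices 1..n),
the up edges introduced (pairs (j,k) for j -> k), and the down edges introduced
(pairs (j,k) for the edge k <- j, directed from j to k).\<close>
record st =
  yv :: "nat \<Rightarrow> int"
  upE :: "(nat \<times> nat) set"
  downE :: "(nat \<times> nat) set"

definition init_st :: "nat list \<Rightarrow> st" where
  "init_st xs = \<lparr> yv = (\<lambda>k. if 1 \<le> k \<and> k \<le> length xs then int (xs ! (k - 1)) - 1 else 0),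
                 upE = {}, downE = {} \<rparr>"

definition up_upd :: "nat \<Rightarrow> (nat \<Rightarrow> int) \<Rightarrow> nat \<Rightarrow> nat \<Rightarrow> int" where
  "up_upd n y j = (\<lambda>k. if k = j then -1
      else if 1 \<le> k \<and> k \<le> n \<and> j < k \<and> 0 < y k then y k - 1
      else if 1 \<le> k \<and> k \<le> n \<and> y k < 0 then y k - 1
      else y k)"

definition down_upd :: "nat \<Rightarrow> (nat \<Rightarrow> int) \<Rightarrow> nat \<Rightarrow> nat \<Rightarrow> int" where
  "down_upd n y j = (\<lambda>k. if 1 \<le> k \<and> k < j \<and> 0 < y k then y k - 1 else y k)"

definition dcand :: "nat \<Rightarrow> (nat \<Rightarrow> int) \<Rightarrow> (nat \<times> nat) set \<Rightarrow> nat set" where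
  "dcand n y D = {j \<in> {1..n}. \<exists>k. 1 \<le> k \<and> k < j \<and> 0 < y k \<and> (j, k) \<notin> D}"

text \<open>One step of Algorithm A (nondeterministic only in the choice among
down feeder candidates of minimal y-value).\<close>
inductive astep :: "nat \<Rightarrow> st \<Rightarrow> lbl \<Rightarrow> st \<Rightarrow> bool" for n where
  up: "\<exists>k\<in>{1..n}. yv \<sigma> k = 0 \<Longrightarrow> j = Max {k \<in> {1..n}. yv \<sigma> k = 0} \<Longrightarrow>
       astep n \<sigma> (Up j)
         \<lparr> yv = up_upd n (yv \<sigma>) j,
           upE = upE \<sigma> \<union> {(j, k) | k. j < k \<and> k \<le> n \<and> 0 < yv \<sigma> k},
           downE = downE \<sigma> \<rparr>"
| down: "\<not> (\<exists>k\<in>{1..n}. yv \<sigma> k = 0) \<Longrightarrow> \<exists>k\<in>{1..n}. 0 < yv \<sigma> k \<Longrightarrow>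
       j \<in> dcand n (yv \<sigma>) (downE \<sigma>) \<Longrightarrow>
       (\<forall>j' \<in> dcand n (yv \<sigma>) (downE \<sigma>). yv \<sigma> j \<le> yv \<sigma> j') \<Longrightarrow>
       astep n \<sigma> (Down j)
         \<lparr> yv = down_upd n (yv \<sigma>) j,
           upE = upE \<sigma>,
           downE = downE \<sigma> \<union> {(j, k) | k. 1 \<le> k \<and> k < j \<and> 0 < yv \<sigma> k} \<rparr>"

definition stopped :: "nat \<Rightarrow> st \<Rightarrow> bool" where
  "stopped n \<sigma> \<longleftrightarrow> (\<forall>k\<in>{1..n}. yv \<sigma> k < 0)"

inductive steps :: "nat \<Rightarrow> st \<Rightarrow> lbl list \<Rightarrow> st \<Rightarrow> bool" for n where
  nil: "steps n \<sigma> [] \<sigma>"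
| cons: "astep n \<sigma> l \<sigma>' \<Longrightarrow> steps n \<sigma>' ls \<sigma>'' \<Longrightarrow> steps n \<sigma> (l # ls) \<sigma>''"

end

theory Submission
  imports Defs
begin

fun isUp :: "lbl \<Rightarrow> bool" where
  "isUp (Up _) = True" | "isUp (Down _) = False"

definition cnt :: "lbl list \<Rightarrow> nat \<Rightarrow> nat" where
  "cnt ls a = length (filter isUp (drop a ls))"

definition SI :: "nat \<Rightarrow> st \<Rightarrow> bool" where
  "SI n \<sigma> \<longleftrightarrow> downE \<sigma> \<subseteq> {1..n} \<times> {1..n} \<and>
     (\<forall>k\<in>{1..n}. 0 < yv \<sigma> k \<longrightarrow>
        yv \<sigma> k + int (card {j\<in>{k<..n}. (j,k)\<in>downE \<sigma>}) \<le> int (n-k) + int (card {i\<in>{1..<k}. 0 \<le> yv \<sigma> i}))"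

definition mu :: "nat \<Rightarrow> st \<Rightarrow> nat" where
  "mu n \<sigma> = card {k\<in>{1..n}. 0 \<le> yv \<sigma> k} + (n*n - card (downE \<sigma>))"

definition TI :: "nat \<Rightarrow> lbl list \<Rightarrow> st \<Rightarrow> bool" where
  "TI n ls \<sigma> \<longleftrightarrow> (\<forall>k\<in>{1..n}. yv \<sigma> k < 0 \<longleftrightarrow> Up k \<in> set ls) \<and> distinct (filter isUp ls)
    \<and> (\<forall>k. Up k \<in> set ls \<longrightarrow> k\<in>{1..n})
    \<and> (\<forall>a<length ls. \<forall>k. ls!a = Up k \<longrightarrow> yv \<sigma> k = - int (cnt ls a))"

lemma up_j:
  fixes n :: nat
  assumes "\<exists>k\<in>{1..n}. y k = (0::int)" "j = Max {k \<in> {1..n}. y k = 0}"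
  shows "j \<in> {1..n}" "y j = 0" "\<And>k. k\<in>{1..n} \<Longrightarrow> y k = 0 \<Longrightarrow> k \<le> j"
proof -
  have f: "finite {k \<in> {1..n}. y k = 0}" by (rule finite_subset[of _ "{1..n}"]) auto
  have ne: "{k \<in> {1..n}. y k = 0} \<noteq> {}" using assms(1) by blast
  have "j \<in> {k \<in> {1..n}. y k = 0}" using Max_in[OF f ne] assms(2) by simp
  then show "j \<in> {1..n}" "y j = 0" by auto
  show "\<And>k. k\<in>{1..n} \<Longrightarrow> y k = 0 \<Longrightarrow> k \<le> j" using assms(2) f by (auto intro: Max_ge)
qed

lemma F1: assumes "k\<in>{1..n}" "0 < up_upd n y j k"
  shows "0 < y k \<and> up_upd n y j k = y k - (if j<k then 1 else 0)"
  using assms by (auto simp: up_upd_def split: if_splits)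

lemma F2: assumes "i\<in>{1..n}" "i \<noteq> j" "\<And>k. k\<in>{1..n} \<Longrightarrow> y k = 0 \<Longrightarrow> k \<le> j"
  shows "0 \<le> up_upd n y j i \<longleftrightarrow> 0 \<le> y i"
  using assms(1,2) assms(3)[of i] by (auto simp: up_upd_def)

lemma F2': assumes "i\<in>{1..n}" "i \<noteq> j"
  shows "up_upd n y j i < 0 \<longleftrightarrow> y i < 0"
  using assms by (auto simp: up_upd_def)

lemma F3: "up_upd n y j j = -1" by (simp add: up_upd_def)

lemma F4: assumes "i\<in>{1..n}" "i \<noteq> j" "y i < 0" shows "up_upd n y j i = y i - 1"
  using assms by (auto simp: up_upd_def)

lemma G1: assumes "0 < down_upd n y j k"
  shows "0 < y k \<and> down_upd n y j k = y k - (if 1 \<le> k \<and> k<j then 1 else 0)"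
  using assms by (auto simp: down_upd_def split: if_splits)

lemma G2: "0 \<le> down_upd n y j i \<longleftrightarrow> 0 \<le> y i"
  by (auto simp: down_upd_def)

lemma G2': "down_upd n y j i < 0 \<longleftrightarrow> y i < 0"
  by (auto simp: down_upd_def)

lemma G3: "y i < 0 \<Longrightarrow> down_upd n y j i = y i"
  by (auto simp: down_upd_def)

lemma SI_step: assumes "astep n \<sigma> l \<sigma>'" "SI n \<sigma>" shows "SI n \<sigma>'"
  using assms
proof cases
  case (up j)
  let ?y = "yv \<sigma>"
  note J = up_j[OF up(3) up(4)]
  show ?thesis unfolding SI_def
  proof (intro conjI ballI impI)
    show "downE \<sigma>' \<subseteq> {1..n} \<times> {1..n}" using assms(2) up(2) by (simp add: SI_def)
  next
    fix k assume k: "k\<in>{1..n}" and pos: "0 < yv \<sigma>' k"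
    have f1: "0 < ?y k" "yv \<sigma>' k = ?y k - (if j<k then 1 else 0)"
      using F1[OF k, of ?y j] pos up(2) by auto
    have old: "?y k + int (card {j\<in>{k<..n}. (j,k)\<in>downE \<sigma>}) \<le> int (n-k) + int (card {i\<in>{1..<k}. 0 \<le> ?y i})"
      using assms(2) k f1(1) by (simp add: SI_def)
    let ?S = "{i\<in>{1..<k}. 0 \<le> ?y i}" and ?S' = "{i\<in>{1..<k}. 0 \<le> yv \<sigma>' i}"
    have cS: "int (card ?S) = int (card ?S') + (if j<k then 1 else 0)"
    proof (cases "j<k")
      case True
      have "?S = insert j ?S'"
      proof (rule set_eqI)
        fix i show "i \<in> ?S \<longleftrightarrow> i \<in> insert j ?S'"
          using F2[of i n j ?y] F3[of n ?y j] J True k up(2) by (cases "i = j") auto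
      qed
      moreover have "j \<notin> ?S'" using F3[of n ?y j] up(2) by simp
      ultimately show ?thesis using True by simp
    next
      case False
      have "?S = ?S'"
      proof (rule set_eqI)
        fix i show "i \<in> ?S \<longleftrightarrow> i \<in> ?S'"
          using F2[of i n j ?y] J False k up(2) by auto
      qed
      then show ?thesis using False by simp
    qed
    show "yv \<sigma>' k + int (card {j\<in>{k<..n}. (j,k)\<in>downE \<sigma>'}) \<le> int (n-k) + int (card ?S')"
      using old cS f1 up(2) by simp
  qed
next
  case (down j)
  let ?y = "yv \<sigma>"
  have jn: "j \<in> {1..n}" using down(5) by (simp add: dcand_def)
  show ?thesis unfolding SI_def
  proof (intro conjI ballI impI)
    show "downE \<sigma>' \<subseteq> {1..n} \<times> {1..n}" using assms(2) down(2) jn by (auto simp: SI_def)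
  next
    fix k assume k: "k\<in>{1..n}" and pos: "0 < yv \<sigma>' k"
    have g1: "0 < ?y k" "yv \<sigma>' k = ?y k - (if 1 \<le> k \<and> k<j then 1 else 0)"
      using G1[of n ?y j k] pos down(2) by auto
    have old: "?y k + int (card {j\<in>{k<..n}. (j,k)\<in>downE \<sigma>}) \<le> int (n-k) + int (card {i\<in>{1..<k}. 0 \<le> ?y i})"
      using assms(2) k g1(1) by (simp add: SI_def)
    have S: "{i\<in>{1..<k}. 0 \<le> yv \<sigma>' i} = {i\<in>{1..<k}. 0 \<le> ?y i}"
      using G2[of n ?y j] down(2) by auto
    let ?C = "{j\<in>{k<..n}. (j,k)\<in>downE \<sigma>}" and ?C' = "{j\<in>{k<..n}. (j,k)\<in>downE \<sigma>'}"
    have cC: "int (card ?C') \<le> int (card ?C) + (if 1 \<le> k \<and> k<j then 1 else 0)"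
    proof (cases "1 \<le> k \<and> k<j")
      case True
      have "?C' \<subseteq> insert j ?C" using down(2) by auto
      then have "card ?C' \<le> card (insert j ?C)" by (intro card_mono) auto
      also have "\<dots> \<le> card ?C + 1" by (simp add: card_insert_le_m1)
      finally show ?thesis using True by simp
    next
      case False
      have "?C' = ?C" using down(2) False by auto
      then show ?thesis using False by simp
    qed
    show "yv \<sigma>' k + int (card ?C') \<le> int (n-k) + int (card {i\<in>{1..<k}. 0 \<le> yv \<sigma>' i})"
      using old cC g1 S by simp
  qed
qed

lemma mu_step: assumes "astep n \<sigma> l \<sigma>'" "SI n \<sigma>" shows "mu n \<sigma>' < mu n \<sigma>"
  using assms
proof cases
  case (up j)
  let ?y = "yv \<sigma>"
  note J = up_j[OF up(3) up(4)]
  let ?N = "{k\<in>{1..n}. 0 \<le> ?y k}" and ?N' = "{k\<in>{1..n}. 0 \<le> yv \<sigma>' k}"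
  have "?N' = ?N - {j}"
  proof (rule set_eqI)
    fix i show "i \<in> ?N' \<longleftrightarrow> i \<in> ?N - {j}"
      using F2[of i n j ?y] F3[of n ?y j] J up(2) by (cases "i = j") auto
  qed
  moreover have jN: "j \<in> ?N" using J by simp
  moreover have fN: "finite ?N" by (rule finite_subset[of _ "{1..n}"]) auto
  ultimately have lt: "card ?N' < card ?N" using card_Diff1_less[OF fN jN] by simp
  have dd: "downE \<sigma>' = downE \<sigma>" using up(2) by simp
  show ?thesis unfolding mu_def using lt dd by simp
next
  case (down j)
  let ?y = "yv \<sigma>"
  have N: "{k\<in>{1..n}. 0 \<le> yv \<sigma>' k} = {k\<in>{1..n}. 0 \<le> ?y k}"
    using G2[of n ?y j] down(2) by auto
  have sub: "downE \<sigma>' \<subseteq> {1..n} \<times> {1..n}" using SI_step[OF assms] by (simp add: SI_def)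
  have fin: "finite (downE \<sigma>')" using sub finite_subset by blast
  have le: "card (downE \<sigma>') \<le> n*n" using card_mono[OF _ sub] by simp
  obtain k where k: "1 \<le> k" "k < j" "0 < ?y k" "(j,k) \<notin> downE \<sigma>" using down(5) by (auto simp: dcand_def)
  have "downE \<sigma> \<subset> downE \<sigma>'" using down(2) k by auto
  then have "card (downE \<sigma>) < card (downE \<sigma>')" using fin psubset_card_mono by blast
  then have "n*n - card (downE \<sigma>') < n*n - card (downE \<sigma>)" using le by linarith
  then show ?thesis unfolding mu_def using N by simp
qed

lemma progress: assumes "SI n \<sigma>" "\<not> stopped n \<sigma>" shows "\<exists>l \<sigma>'. astep n \<sigma> l \<sigma>'"
proof (cases "\<exists>k\<in>{1..n}. yv \<sigma> k = 0")
  case True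
  then show ?thesis using astep.up[OF True refl] by blast
next
  case False
  let ?y = "yv \<sigma>"
  let ?P = "{k\<in>{1..n}. 0 < ?y k}"
  have fP: "finite ?P" by (rule finite_subset[of _ "{1..n}"]) auto
  obtain k where k: "k \<in> {1..n}" "\<not> ?y k < 0" using assms(2) unfolding stopped_def by blast
  have "?y k \<noteq> 0" using False k(1) by blast
  then have kP: "k \<in> ?P" using k by simp
  then have pne: "?P \<noteq> {}" by blast
  define k0 where "k0 = Min ?P"
  have k0P: "k0 \<in> ?P" using Min_in[OF fP pne] k0_def by simp
  have below: "?y i < 0" if i: "i \<in> {1..<k0}" for i
  proof -
    have "i \<in> {1..n}" using i k0P by auto
    moreover have "i \<notin> ?P"
    proof
      assume "i \<in> ?P"
      then have "k0 \<le> i" unfolding k0_def using Min_le[OF fP] by blast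
      then show False using i by simp
    qed
    moreover have "?y i \<noteq> 0" using False calculation(1) by blast
    ultimately show "?y i < 0" by simp
  qed
  have e: "{i\<in>{1..<k0}. 0 \<le> ?y i} = {}" using below by fastforce
  define C where "C = card {j\<in>{k0<..n}. (j,k0)\<in>downE \<sigma>}"
  have "?y k0 + int C \<le> int (n-k0) + int (card {i\<in>{1..<k0}. 0 \<le> ?y i})"
    using assms(1) k0P unfolding SI_def C_def by blast
  then have "?y k0 + int C \<le> int (n-k0)" unfolding e by simp
  then have "int C < int (n-k0)" using k0P by simp
  then have "C < card {k0<..n}" by simp
  then have "card {j\<in>{k0<..n}. (j,k0)\<in>downE \<sigma>} < card {k0<..n}" unfolding C_def .
  then have "{j\<in>{k0<..n}. (j,k0)\<in>downE \<sigma>} \<noteq> {k0<..n}" by (metis less_irrefl)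
  then obtain j where j: "j \<in> {k0<..n}" "(j,k0) \<notin> downE \<sigma>" by blast
  let ?D = "dcand n ?y (downE \<sigma>)"
  have jD: "j \<in> ?D" unfolding dcand_def using j k0P by auto
  have fD: "finite ?D" unfolding dcand_def by (rule finite_subset[of _ "{1..n}"]) auto
  define m where "m = Min (?y ` ?D)"
  have "m \<in> ?y ` ?D" unfolding m_def using jD fD by (intro Min_in) auto
  then obtain j' where j': "j' \<in> ?D" "?y j' = m" by blast
  have mn: "\<forall>j''\<in>?D. ?y j' \<le> ?y j''"
  proof
    fix j'' assume "j'' \<in> ?D"
    then have "m \<le> ?y j''" unfolding m_def using fD by (intro Min_le) auto
    then show "?y j' \<le> ?y j''" using j'(2) by simp
  qed
  have pos: "\<exists>k\<in>{1..n}. 0 < ?y k" using kP by blast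
  show ?thesis using astep.down[OF False pos j'(1) mn] by blast
qed

lemma steps_SI: "steps n \<sigma> ls \<sigma>' \<Longrightarrow> SI n \<sigma> \<Longrightarrow> SI n \<sigma>'"
  by (induction rule: steps.induct) (auto intro: SI_step)

lemma steps_snocD: "steps n a (ls @ [l]) c \<Longrightarrow> \<exists>b. steps n a ls b \<and> astep n b l c"
proof (induction ls arbitrary: a)
  case Nil
  then show ?case by (auto elim!: steps.cases intro: steps.nil)
next
  case (Cons x ls)
  from Cons.prems obtain b where b: "astep n a x b" "steps n b (ls @ [l]) c"
    by (auto elim: steps.cases)
  then show ?case using Cons.IH[OF b(2)] by (auto intro: steps.cons)
qed

lemma cnt_snoc: "a \<le> length ls \<Longrightarrow> cnt (ls @ [l]) a = cnt ls a + (if isUp l then 1 else 0)"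
  by (simp add: cnt_def)

lemma TI_step: assumes "TI n ls \<sigma>" "astep n \<sigma> l \<sigma>'" shows "TI n (ls @ [l]) \<sigma>'"
  using assms(2)
proof cases
  case (up j)
  let ?y = "yv \<sigma>"
  note J = up_j[OF up(3) up(4)]
  have "yv \<sigma> j < 0 \<longleftrightarrow> Up j \<in> set ls" using assms(1) J(1) unfolding TI_def by blast
  then have nj: "Up j \<notin> set ls" using J(2) by simp
  have i: "\<forall>k\<in>{1..n}. yv \<sigma>' k < 0 \<longleftrightarrow> Up k \<in> set (ls @ [l])"
  proof
    fix k assume k: "k \<in> {1..n}"
    show "yv \<sigma>' k < 0 \<longleftrightarrow> Up k \<in> set (ls @ [l])"
    proof (cases "k = j")
      case True then show ?thesis using up(1,2) F3[of n ?y j] by simp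
    next
      case False then show ?thesis using up(1,2) F2'[OF k False, of ?y] assms(1) k by (auto simp: TI_def)
    qed
  qed
  have iii: "\<forall>a<length (ls@[l]). \<forall>k. (ls@[l])!a = Up k \<longrightarrow> yv \<sigma>' k = - int (cnt (ls@[l]) a)"
  proof (intro allI impI)
    fix a k assume a: "a < length (ls@[l])" and e: "(ls@[l])!a = Up k"
    show "yv \<sigma>' k = - int (cnt (ls@[l]) a)"
    proof (cases "a < length ls")
      case True
      then have e': "ls!a = Up k" using e by (simp add: nth_append)
      then have kin: "Up k \<in> set ls" using True nth_mem by metis
      then have kn: "k \<in> {1..n}" and neg: "?y k < 0" using assms(1) by (auto simp: TI_def)
      have kj: "k \<noteq> j" using kin nj by auto
      have "?y k = - int (cnt ls a)" using assms(1) True e' by (simp add: TI_def)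
      then show ?thesis using F4[of k n j ?y, OF kn kj neg] up(1,2) cnt_snoc[of a ls l] True by simp
    next
      case False
      then have "a = length ls" using a by simp
      moreover then have "k = j" using e up(1,2) by simp
      ultimately show ?thesis using up(1,2) F3[of n ?y j] by (simp add: cnt_def)
    qed
  qed
  have ii: "distinct (filter isUp (ls@[l]))" using assms(1) nj up(1) by (simp add: TI_def)
  have iv: "\<forall>k. Up k \<in> set (ls@[l]) \<longrightarrow> k\<in>{1..n}" using assms(1) J(1) up(1) by (auto simp: TI_def)
  show ?thesis using i ii iii iv unfolding TI_def by blast
next
  case (down j)
  let ?y = "yv \<sigma>"
  have i: "\<forall>k\<in>{1..n}. yv \<sigma>' k < 0 \<longleftrightarrow> Up k \<in> set (ls @ [l])"
    using assms(1) down(1,2) G2'[of n ?y j] unfolding TI_def by auto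
  have iii: "\<forall>a<length (ls@[l]). \<forall>k. (ls@[l])!a = Up k \<longrightarrow> yv \<sigma>' k = - int (cnt (ls@[l]) a)"
  proof (intro allI impI)
    fix a k assume a: "a < length (ls@[l])" and e: "(ls@[l])!a = Up k"
    have True': "a < length ls" using a e down(1,2) by (cases "a < length ls") (auto simp: nth_append)
    then have e': "ls!a = Up k" using e by (simp add: nth_append)
    then have kin: "Up k \<in> set ls" using True' nth_mem by metis
    then have neg: "?y k < 0" using assms(1) by (auto simp: TI_def)
    have "?y k = - int (cnt ls a)" using assms(1) True' e' by (simp add: TI_def)
    then show "yv \<sigma>' k = - int (cnt (ls@[l]) a)" using G3[of ?y k n j, OF neg] down(1,2) cnt_snoc[of a ls l] True' by simp
  qed
  have ii: "distinct (filter isUp (ls@[l]))" using assms(1) down(1) by (simp add: TI_def)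
  have iv: "\<forall>k. Up k \<in> set (ls@[l]) \<longrightarrow> k\<in>{1..n}" using assms(1) down(1) by (auto simp: TI_def)
  show ?thesis using i ii iii iv unfolding TI_def by blast
qed

lemma steps_TI: "steps n \<sigma>0 ls \<sigma> \<Longrightarrow> TI n [] \<sigma>0 \<Longrightarrow> TI n ls \<sigma>"
proof (induction ls arbitrary: \<sigma> rule: rev_induct)
  case Nil
  then have "\<sigma> = \<sigma>0" by (auto elim: steps.cases)
  then show ?case using Nil by simp
next
  case (snoc l ls)
  from steps_snocD[OF snoc.prems(1)] obtain b where b: "steps n \<sigma>0 ls b" "astep n b l \<sigma>" by blast
  show ?case using TI_step[OF snoc.IH[OF b(1) snoc.prems(2)] b(2)] .
qed

lemma pf_facts: assumes "parking_function xs" "i < length xs"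
  shows "0 < xs ! i" "xs ! i \<le> length xs"
proof -
  show "0 < xs ! i" using assms unfolding parking_function_def by blast
  have "xs ! i \<in> set (sort xs)" using assms(2) by simp
  then obtain m where m: "m < length (sort xs)" "sort xs ! m = xs ! i" by (metis in_set_conv_nth)
  have ml: "m < length xs" using m(1) by simp
  have "sort xs ! m \<le> m + 1" using assms(1) ml unfolding parking_function_def by blast
  then show "xs ! i \<le> length xs" using m(2) ml by linarith
qed

lemma init_TI: assumes "parking_function xs" shows "TI (length xs) [] (init_st xs)"
  unfolding TI_def
proof (intro conjI ballI allI impI)
  fix k assume k: "k \<in> {1..length xs}"
  have "0 < xs ! (k-1)" using pf_facts(1)[OF assms, of "k-1"] k by auto
  then show "yv (init_st xs) k < 0 \<longleftrightarrow> Up k \<in> set []" using k by (simp add: init_st_def)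
qed auto

lemma init_SI: assumes "parking_function xs" shows "SI (length xs) (init_st xs)"
  unfolding SI_def
proof (intro conjI ballI impI)
  show "downE (init_st xs) \<subseteq> {1..length xs} \<times> {1..length xs}" by (simp add: init_st_def)
next
  fix k assume k: "k \<in> {1..length xs}" and "0 < yv (init_st xs) k"
  let ?n = "length xs"
  have le: "xs ! (k-1) \<le> ?n" using pf_facts(2)[OF assms, of "k-1"] k by auto
  have S: "{i\<in>{1..<k}. 0 \<le> yv (init_st xs) i} = {1..<k}"
  proof (rule set_eqI)
    fix i show "i \<in> {i\<in>{1..<k}. 0 \<le> yv (init_st xs) i} \<longleftrightarrow> i \<in> {1..<k}"
    proof
      assume i: "i \<in> {1..<k}"
      then have "0 < xs ! (i-1)" using pf_facts(1)[OF assms, of "i-1"] k by auto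
      then show "i \<in> {i\<in>{1..<k}. 0 \<le> yv (init_st xs) i}" using i k by (simp add: init_st_def)
    qed simp
  qed
  have C: "{j\<in>{k<..?n}. (j,k)\<in>downE (init_st xs)} = {}" by (simp add: init_st_def)
  have "yv (init_st xs) k = int (xs ! (k-1)) - 1" using k by (simp add: init_st_def)
  then show "yv (init_st xs) k + int (card {j\<in>{k<..?n}. (j,k)\<in>downE (init_st xs)})
      \<le> int (?n-k) + int (card {i\<in>{1..<k}. 0 \<le> yv (init_st xs) i})"
    unfolding S C using le k by simp
qed

lemma pos_unique: "distinct (filter P xs) \<Longrightarrow> a < length xs \<Longrightarrow> b < length xs \<Longrightarrow> xs!a = xs!b \<Longrightarrow> P (xs!a) \<Longrightarrow> a = b"
proof (induction xs arbitrary: a b)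
  case Nil then show ?case by simp
next
  case (Cons x xs)
  have d: "distinct (filter P xs)" using Cons.prems(1) by (cases "P x") auto
  show ?case
  proof (cases a)
    case 0
    show ?thesis
    proof (cases b)
      case (Suc b')
      then have "xs ! b' = x" "b' < length xs" using Cons.prems 0 by auto
      then have "x \<in> set (filter P xs)" using Cons.prems(5) 0 by (auto simp: nth_mem)
      then show ?thesis using Cons.prems(1,5) 0 by simp
    qed (use 0 in simp)
  next
    case (Suc a')
    show ?thesis
    proof (cases b)
      case 0
      then have "xs ! a' = x" "a' < length xs" using Cons.prems Suc by auto
      then have "x \<in> set (filter P xs)" using Cons.prems(4,5) Suc 0 by (auto simp: nth_mem)
      then show ?thesis using Cons.prems(1,4,5) Suc 0 by simp
    next
      case (Suc b')
      then show ?thesis using Cons.IH[OF d, of a' b'] Cons.prems \<open>a = Suc a'\<close> by simp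
    qed
  qed
qed

lemma len_filter_drop: "length (filter P (drop m xs)) \<le> length (filter P xs)"
proof -
  have "filter P xs = filter P (take m xs) @ filter P (drop m xs)"
    by (metis append_take_drop_id filter_append)
  then show ?thesis by (metis le_add2 length_append)
qed

lemma cnt_pos: "a < length ls \<Longrightarrow> isUp (ls!a) \<Longrightarrow> cnt ls a = Suc (cnt ls (Suc a))"
  by (simp add: cnt_def Cons_nth_drop_Suc[symmetric])

lemma cnt_mono: "a \<le> b \<Longrightarrow> cnt ls b \<le> cnt ls a"
proof -
  assume "a \<le> b"
  then have "drop b ls = drop (b-a) (drop a ls)" by simp
  then show ?thesis unfolding cnt_def using len_filter_drop by metis
qed

lemma cnt_strict: "a < b \<Longrightarrow> a < length ls \<Longrightarrow> isUp (ls!a) \<Longrightarrow> cnt ls b < cnt ls a"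
  using cnt_pos[of a ls] cnt_mono[of "Suc a" b ls] by simp

lemma final:
  assumes T: "TI n ls \<sigma>" and S: "stopped n \<sigma>"
  shows "(\<forall>j\<in>{1..n}. card {i. i < length ls \<and> ls ! i = Up j} = 1)
        \<and> bij_betw (yv \<sigma>) {1..n} {- int n .. -1}
        \<and> (\<forall>i\<in>{1..n}. \<forall>j\<in>{1..n}. i \<noteq> j \<longrightarrow>
             (\<bar>yv \<sigma> i\<bar> > \<bar>yv \<sigma> j\<bar> \<longleftrightarrow>
              (\<exists>a b. a < b \<and> b < length ls \<and> ls ! a = Up i \<and> ls ! b = Up j)))"
proof -
  have T1: "Up k \<in> set ls" if "k \<in> {1..n}" for k
    using T S that unfolding TI_def stopped_def by blast
  have dist: "distinct (filter isUp ls)" using T unfolding TI_def by blast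
  have uniq: "a = b" if "a < length ls" "b < length ls" "ls!a = Up k" "ls!b = Up k" for a b k
    using pos_unique[OF dist that(1,2)] that(3,4) by simp
  have val: "yv \<sigma> k = - int (cnt ls a)" if "a < length ls" "ls!a = Up k" for a k
    using T that unfolding TI_def by blast
  have setf: "set (filter isUp ls) = Up ` {1..n}"
  proof (rule set_eqI)
    fix x show "x \<in> set (filter isUp ls) \<longleftrightarrow> x \<in> Up ` {1..n}"
    proof
      assume "x \<in> set (filter isUp ls)"
      then have xx: "x \<in> set ls" "isUp x" by simp_all
      then obtain k where "x = Up k" by (cases x rule: lbl.exhaust) auto
      with xx have "x = Up k" "Up k \<in> set ls" by simp_all
      then show "x \<in> Up ` {1..n}" using T unfolding TI_def by blast
    next
      assume "x \<in> Up ` {1..n}"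
      then show "x \<in> set (filter isUp ls)" using T1 by auto
    qed
  qed
  have tot: "cnt ls 0 = n"
  proof -
    have "cnt ls 0 = card (set (filter isUp ls))" using distinct_card[OF dist] by (simp add: cnt_def)
    also have "\<dots> = card (Up ` {1..n})" using setf by simp
    also have "\<dots> = n" by (subst card_image) (auto simp: inj_on_def)
    finally show ?thesis .
  qed
  have pos: "\<exists>a<length ls. ls!a = Up k" if "k \<in> {1..n}" for k
    using T1[OF that] by (metis in_set_conv_nth)
  have cb: "1 \<le> cnt ls a \<and> cnt ls a \<le> n" if "a < length ls" "ls!a = Up k" for a k
    using cnt_pos[of a ls] cnt_mono[of 0 a ls] that tot by simp
  have ord: "cnt ls b < cnt ls a \<longleftrightarrow> a < b"
    if "a < length ls" "b < length ls" "ls!a = Up i" "ls!b = Up j" "i \<noteq> j" for a b i j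
  proof
    assume "a < b" then show "cnt ls b < cnt ls a" using cnt_strict[of a b ls] that by simp
  next
    assume c: "cnt ls b < cnt ls a"
    show "a < b"
    proof (rule ccontr)
      assume "\<not> a < b"
      moreover have "a \<noteq> b" using that by auto
      ultimately have "b < a" by simp
      then have "cnt ls a < cnt ls b" using cnt_strict[of b a ls] that by simp
      then show False using c by simp
    qed
  qed
  have C1: "\<forall>j\<in>{1..n}. card {i. i < length ls \<and> ls ! i = Up j} = 1"
  proof
    fix j assume "j \<in> {1..n}"
    then obtain a where a: "a < length ls" "ls!a = Up j" using pos by blast
    have "{i. i < length ls \<and> ls ! i = Up j} = {a}" using a uniq by blast
    then show "card {i. i < length ls \<and> ls ! i = Up j} = 1" by simp
  qed
  have inj: "inj_on (yv \<sigma>) {1..n}"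
  proof (rule inj_onI)
    fix i j assume i: "i \<in> {1..n}" and j: "j \<in> {1..n}" and e: "yv \<sigma> i = yv \<sigma> j"
    obtain a where a: "a < length ls" "ls!a = Up i" using pos[OF i] by blast
    obtain b where b: "b < length ls" "ls!b = Up j" using pos[OF j] by blast
    have "cnt ls a = cnt ls b" using e val[OF a] val[OF b] by simp
    then have eq: "cnt ls a = cnt ls b" .
    show "i = j"
    proof (rule ccontr)
      assume ij: "i \<noteq> j"
      have "\<not> a < b" using ord[OF a(1) b(1) a(2) b(2) ij] eq by simp
      moreover have "\<not> b < a" using ord[OF b(1) a(1) b(2) a(2)] ij eq by simp
      ultimately have "a = b" by simp
      then show False using a(2) b(2) ij by simp
    qed
  qed
  have sub: "yv \<sigma> ` {1..n} \<subseteq> {- int n .. -1}"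
  proof
    fix y assume "y \<in> yv \<sigma> ` {1..n}"
    then obtain k where k: "k \<in> {1..n}" "y = yv \<sigma> k" by blast
    obtain a where a: "a < length ls" "ls!a = Up k" using pos[OF k(1)] by blast
    show "y \<in> {- int n .. -1}" using val[OF a] cb[OF a] k(2) by simp
  qed
  have "card (yv \<sigma> ` {1..n}) = card {- int n .. -1}" using card_image[OF inj] by simp
  then have "yv \<sigma> ` {1..n} = {- int n .. -1}" using card_subset_eq[OF _ sub] by simp
  then have C2: "bij_betw (yv \<sigma>) {1..n} {- int n .. -1}" using inj by (simp add: bij_betw_def)
  have C3: "\<forall>i\<in>{1..n}. \<forall>j\<in>{1..n}. i \<noteq> j \<longrightarrow>
             (\<bar>yv \<sigma> i\<bar> > \<bar>yv \<sigma> j\<bar> \<longleftrightarrow>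
              (\<exists>a b. a < b \<and> b < length ls \<and> ls ! a = Up i \<and> ls ! b = Up j))"
  proof (intro ballI impI)
    fix i j assume i: "i \<in> {1..n}" and j: "j \<in> {1..n}" and ij: "i \<noteq> j"
    obtain a where a: "a < length ls" "ls!a = Up i" using pos[OF i] by blast
    obtain b where b: "b < length ls" "ls!b = Up j" using pos[OF j] by blast
    have "\<bar>yv \<sigma> i\<bar> > \<bar>yv \<sigma> j\<bar> \<longleftrightarrow> cnt ls b < cnt ls a" using val[OF a] val[OF b] by simp
    also have "\<dots> \<longleftrightarrow> a < b" using ord[OF a(1) b(1) a(2) b(2) ij] .
    also have "\<dots> \<longleftrightarrow> (\<exists>a b. a < b \<and> b < length ls \<and> ls ! a = Up i \<and> ls ! b = Up j)"
    proof
      assume "a < b" then show "\<exists>a b. a < b \<and> b < length ls \<and> ls ! a = Up i \<and> ls ! b = Up j" using a b by blast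
    next
      assume "\<exists>a b. a < b \<and> b < length ls \<and> ls ! a = Up i \<and> ls ! b = Up j"
      then obtain a' b' where ab: "a' < b'" "b' < length ls" "ls ! a' = Up i" "ls ! b' = Up j" by blast
      have "a' = a" using uniq[of a' a i] ab a by simp
      moreover have "b' = b" using uniq[of b' b j] ab b by simp
      ultimately show "a < b" using ab by simp
    qed
    finally show "\<bar>yv \<sigma> i\<bar> > \<bar>yv \<sigma> j\<bar> \<longleftrightarrow> (\<exists>a b. a < b \<and> b < length ls \<and> ls ! a = Up i \<and> ls ! b = Up j)" .
  qed
  show ?thesis using C1 C2 C3 by blast
qed

theorem lemma2p4:
  fixes xs :: "nat list"
  defines "n \<equiv> length xs"
  assumes pf: "parking_function xs"
  shows "(\<nexists>f. f 0 = init_st xs \<and> (\<forall>i. \<exists>l. astep n (f i) l (f (Suc i))))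
    \<and> (\<forall>ls \<sigma>. steps n (init_st xs) ls \<sigma> \<and> (\<nexists>l \<sigma>'. astep n \<sigma> l \<sigma>') \<longrightarrow> stopped n \<sigma>)
    \<and> (\<forall>ls \<sigma>. steps n (init_st xs) ls \<sigma> \<and> stopped n \<sigma> \<longrightarrow>
          (\<forall>j\<in>{1..n}. card {i. i < length ls \<and> ls ! i = Up j} = 1)
        \<and> bij_betw (yv \<sigma>) {1..n} {- int n .. -1}
        \<and> (\<forall>i\<in>{1..n}. \<forall>j\<in>{1..n}. i \<noteq> j \<longrightarrow>
             (\<bar>yv \<sigma> i\<bar> > \<bar>yv \<sigma> j\<bar> \<longleftrightarrow>
              (\<exists>a b. a < b \<and> b < length ls \<and> ls ! a = Up i \<and> ls ! b = Up j))))"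
proof -
  have SI0: "SI n (init_st xs)" using init_SI[OF pf] by (simp add: n_def)
  have TI0: "TI n [] (init_st xs)" using init_TI[OF pf] by (simp add: n_def)
  have P1: "\<nexists>f. f 0 = init_st xs \<and> (\<forall>i. \<exists>l. astep n (f i) l (f (Suc i)))"
  proof
    assume "\<exists>f. f 0 = init_st xs \<and> (\<forall>i. \<exists>l. astep n (f i) l (f (Suc i)))"
    then obtain f where f0: "f 0 = init_st xs" and fs: "\<And>i. \<exists>l. astep n (f i) l (f (Suc i))" by blast
    have SIf: "SI n (f i)" for i
    proof (induction i)
      case 0 then show ?case using SI0 f0 by simp
    next
      case (Suc i) then show ?case using fs[of i] SI_step by blast
    qed
    have dec: "mu n (f (Suc i)) < mu n (f i)" for i using fs[of i] mu_step SIf by blast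
    have "mu n (f i) + i \<le> mu n (f 0)" for i
    proof (induction i)
      case 0 then show ?case by simp
    next
      case (Suc i) then show ?case using dec[of i] by simp
    qed
    from this[of "Suc (mu n (f 0))"] show False by simp
  qed
  have P2: "\<forall>ls \<sigma>. steps n (init_st xs) ls \<sigma> \<and> (\<nexists>l \<sigma>'. astep n \<sigma> l \<sigma>') \<longrightarrow> stopped n \<sigma>"
    using steps_SI[OF _ SI0] progress by blast
  have P3: "\<forall>ls \<sigma>. steps n (init_st xs) ls \<sigma> \<and> stopped n \<sigma> \<longrightarrow>
          (\<forall>j\<in>{1..n}. card {i. i < length ls \<and> ls ! i = Up j} = 1)
        \<and> bij_betw (yv \<sigma>) {1..n} {- int n .. -1}
        \<and> (\<forall>i\<in>{1..n}. \<forall>j\<in>{1..n}. i \<noteq> j \<longrightarrow>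
             (\<bar>yv \<sigma> i\<bar> > \<bar>yv \<sigma> j\<bar> \<longleftrightarrow>
              (\<exists>a b. a < b \<and> b < length ls \<and> ls ! a = Up i \<and> ls ! b = Up j)))"
  proof (intro allI impI)
    fix ls \<sigma> assume h: "steps n (init_st xs) ls \<sigma> \<and> stopped n \<sigma>"
    then have "TI n ls \<sigma>" using steps_TI TI0 by blast
    then show "(\<forall>j\<in>{1..n}. card {i. i < length ls \<and> ls ! i = Up j} = 1)
        \<and> bij_betw (yv \<sigma>) {1..n} {- int n .. -1}
        \<and> (\<forall>i\<in>{1..n}. \<forall>j\<in>{1..n}. i \<noteq> j \<longrightarrow>
             (\<bar>yv \<sigma> i\<bar> > \<bar>yv \<sigma> j\<bar> \<longleftrightarrow>
              (\<exists>a b. a < b \<and> b < length ls \<and> ls ! a = Up i \<and> ls ! b = Up j)))"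
      using final h by blast
  qed
  show ?thesis using P1 P2 P3 by blast
qed


end
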